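(* Let $c,\rho\in(0,1)$ with $c+\rho>1$. Suppose the conditional gradient algorithm chooses $\theta_k\in[0,1]$ with $\rho\hat\theta_k\le\theta_k\le\hat\theta_k$, where \[ \hat\theta_k=\max\{\theta\in[0,1]:(1-\theta)\mathrm{gap}(x_k,g_k)+\mathcal D(x_k,s_k,\theta)\le(1-c\theta)\mathrm{gap}(x_k,g_k)\}. \] Suppose $q>1$, $r\in[0,1]$ are such that $(\mathcal D,\mathrm{gap})$ satisfies the $(q,r)$-growth property with some finite $M>0$. Then for $k=0,1,\dots$ \[ \mathrm{gap}_{k+1}\le\mathrm{gap}_k\Big(1-(c+\rho-1)\min\Big\{1,\Big(\tfrac{q(1-c)}{M}\mathrm{gap}_k^{1-r}\Big)^{\frac1{q-1}}\Big\}\Big). \] If $r=1$ then $\mathrm{gap}_k\le\mathrm{gap}_0\big(1-(c+\rho-1)\min\{1,(q(1-c)/M)^{1/(q-1)}\}\big)^k$. If $r\in[0,1)$ then $\mathrm{gap}_k\le\mathrm{gap}_0(1-(c+\rho-1))^k$ for $k=0,\dots,k_0$, where $k_0$ is the smallest $k$ with $\mathrm{gap}_k^{1-r}\le\frac{M}{q(1-c)}$, and for $k\ge k_0$ \[ \mathrm{gap}_k\le\Big(\mathrm{gap}_{k_0}^{\frac{r-1}{q-1}}+\frac{(1-r)(c+\rho-1)}{q-1}\Big(\frac{q(1-c)}{M}\Big)^{\frac1{q-1}}(k-k_0)\Big)^{\frac{q-1}{r-1}}. \]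
   Context: Let $f,\Psi:\mathbb{R}^n\to\mathbb{R}\cup\{\infty\}$ be closed proper convex functions such that (A1) $f$ is differentiable on $\mathrm{dom}(\Psi)$, and (A2) for every $x\in\mathrm{dom}(f)$ the set $\arg\min_s\{\langle\nabla f(x),s\rangle+\Psi(s)\}$ is nonempty. $f^*,\Psi^*$ denote convex conjugates; $\arg\min_y\{\langle g,y\rangle+\Psi(y)\}=\partial\Psi^*(-g)$. $D_f(y,x)=f(y)-f(x)-\langle\nabla f(x),y-x\rangle$. Duality gap: $\mathrm{gap}(x,u)=f(x)+\Psi(x)+f^*(u)+\Psi^*(-u)$ for $x\in\mathrm{dom}(\Psi)$, $u\in\mathrm{dom}(f^* )$. For $x,s\in\mathrm{dom}(\Psi)$, $\theta\in[0,1]$: $\mathcal{D}(x,s,\theta)=D_f(x+\theta(s-x),x)+\Psi(x+\theta(s-x))-(1-\theta)\Psi(x)-\theta\Psi(s)$. Conditional gradient algorithm: given $x_0\in\mathrm{dom}(\Psi)$, for $k=0,1,2,\dots$ let $g_k=\nabla f(x_k)$, pick $s_k\in\arg\min_y\{\langle g_k,y\rangle+\Psi(y)\}$ and $\theta_k\in[0,1]$, and set $x_{k+1}=(1-\theta_k)x_k+\theta_k s_k$. The best duality gaps are $\mathrm{gap}_k=\min_{i=0,\dots,k}\mathrm{gap}(x_k,g_i)$. $(q,r)$-growth property ($q>1$, $r\in[0,1]$): there is a finite $M>0$ such that for all $x\in\mathrm{dom}(\Psi)$, $g=\nabla f(x)$ and $s\in\partial\Psi^*(-g)$, $\mathcal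 D(x,s,\theta)\le \frac{M\theta^q}{q}\mathrm{gap}(x,g)^r$ for all $\theta\in[0,1]$. *)

theory Defs
  imports "HOL-Analysis.Analysis"
begin

definition edom :: "('a \<Rightarrow> ereal) \<Rightarrow> 'a set" where
  "edom h = {x. h x < \<infinity>}"

definition closed_proper_convex :: "('a::euclidean_space \<Rightarrow> ereal) \<Rightarrow> bool" where
  "closed_proper_convex h \<longleftrightarrow>
     (\<forall>x. h x \<noteq> -\<infinity>) \<and> edom h \<noteq> {} \<and>
     convex {(x, t::real). h x \<le> ereal t} \<and> closed {(x, t::real). h x \<le> ereal t}"

definition fconj :: "('a::real_inner \<Rightarrow> ereal) \<Rightarrow> 'a \<Rightarrow> ereal" where
  "fconj h u = (SUP x. ereal (inner u x) - h x)"

definition esubdiff :: "('a::real_inner \<Rightarrow> ereal) \<Rightarrow> 'a \<Rightarrow> 'a set" where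
  "esubdiff h u = {s. \<bar>h u\<bar> \<noteq> \<infinity> \<and> (\<forall>v. h u + ereal (inner s (v - u)) \<le> h v)}"

definition argmin_lin :: "'a::real_inner \<Rightarrow> ('a \<Rightarrow> ereal) \<Rightarrow> 'a set" where
  "argmin_lin g \<Psi> = {s. \<forall>y. ereal (inner g s) + \<Psi> s \<le> ereal (inner g y) + \<Psi> y}"

text \<open>Bregman divergence D_f(y,x) (f finite at the relevant points).\<close>
definition bregman :: "('a::real_inner \<Rightarrow> ereal) \<Rightarrow> ('a \<Rightarrow> 'a) \<Rightarrow> 'a \<Rightarrow> 'a \<Rightarrow> real" where
  "bregman f gradf y x = real_of_ereal (f y) - real_of_ereal (f x) - inner (gradf x) (y - x)"

definition Dcal :: "('a::real_inner \<Rightarrow> ereal) \<Rightarrow> ('a \<Rightarrow> 'a) \<Rightarrow> ('a \<Rightarrow> ereal) \<Rightarrow> 'a \<Rightarrow> 'a \<Rightarrow> real \<Rightarrow> real" where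
  "Dcal f gradf \<Psi> x s \<theta> =
     bregman f gradf (x + \<theta> *\<^sub>R (s - x)) x + real_of_ereal (\<Psi> (x + \<theta> *\<^sub>R (s - x)))
     - (1 - \<theta>) * real_of_ereal (\<Psi> x) - \<theta> * real_of_ereal (\<Psi> s)"

text \<open>Duality gap gap(x,u) = f(x)+Psi(x)+f*(u)+Psi*(-u) (finite for the arguments used).\<close>
definition dgap :: "('a::real_inner \<Rightarrow> ereal) \<Rightarrow> ('a \<Rightarrow> ereal) \<Rightarrow> 'a \<Rightarrow> 'a \<Rightarrow> real" where
  "dgap f \<Psi> x u = real_of_ereal (f x + \<Psi> x + fconj f u + fconj \<Psi> (- u))"

text \<open>Real power with the convention a^0 = 1 (also for a = 0), unlike powr.\<close>
definition pw :: "real \<Rightarrow> real \<Rightarrow> real" where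
  "pw a b = (if b = 0 then 1 else a powr b)"

definition growth :: "('a::real_inner \<Rightarrow> ereal) \<Rightarrow> ('a \<Rightarrow> 'a) \<Rightarrow> ('a \<Rightarrow> ereal) \<Rightarrow> real \<Rightarrow> real \<Rightarrow> real \<Rightarrow> bool" where
  "growth f gradf \<Psi> q r M \<longleftrightarrow> 0 < M \<and>
     (\<forall>x \<in> edom \<Psi>. \<forall>s \<in> esubdiff (fconj \<Psi>) (- gradf x). \<forall>\<theta> \<in> {0..1}.
        Dcal f gradf \<Psi> x s \<theta> \<le> M * \<theta> powr q / q * pw (dgap f \<Psi> x (gradf x)) r)"

end

theory Submission imports Defs begin

lemma cpc_fin:
  assumes "closed_proper_convex h" "a \<in> edom h"
  shows "h a = ereal (real_of_ereal (h a))"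
  using assms unfolding closed_proper_convex_def edom_def
  by (cases "h a") auto

lemma cpc_conv:
  assumes h: "closed_proper_convex h" and a: "a \<in> edom h" and b: "b \<in> edom h"
    and t: "0 \<le> t" "t \<le> 1"
  shows "h ((1-t) *\<^sub>R a + t *\<^sub>R b) \<le> ereal ((1-t) * real_of_ereal (h a) + t * real_of_ereal (h b))"
proof -
  let ?E = "{(x, t::real). h x \<le> ereal t}"
  have cv: "convex ?E" using h unfolding closed_proper_convex_def by blast
  have "(a, real_of_ereal (h a)) \<in> ?E" using cpc_fin[OF h a] by simp
  moreover have "(b, real_of_ereal (h b)) \<in> ?E" using cpc_fin[OF h b] by simp
  ultimately have "(1-t) *\<^sub>R (a, real_of_ereal (h a)) + t *\<^sub>R (b, real_of_ereal (h b)) \<in> ?E"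
    using cv t unfolding convex_def by auto
  then show ?thesis by simp
qed

lemma cpc_conv':
  assumes h: "closed_proper_convex h" and a: "a \<in> edom h" and b: "b \<in> edom h"
    and t: "0 \<le> t" "t \<le> 1"
  shows "(1-t) *\<^sub>R a + t *\<^sub>R b \<in> edom h"
    "real_of_ereal (h ((1-t) *\<^sub>R a + t *\<^sub>R b)) \<le> (1-t) * real_of_ereal (h a) + t * real_of_ereal (h b)"
proof -
  have c: "h ((1-t) *\<^sub>R a + t *\<^sub>R b) \<le> ereal ((1-t) * real_of_ereal (h a) + t * real_of_ereal (h b))"
    by (rule cpc_conv[OF assms])
  then show 1: "(1-t) *\<^sub>R a + t *\<^sub>R b \<in> edom h" unfolding edom_def
    using le_less_trans by fastforce
  show "real_of_ereal (h ((1-t) *\<^sub>R a + t *\<^sub>R b)) \<le> (1-t) * real_of_ereal (h a) + t * real_of_ereal (h b)"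
    using c cpc_fin[OF h 1] by (metis ereal_less_eq(3))
qed

lemma grad_ineq:
  assumes h: "closed_proper_convex f" and y0: "y0 \<in> edom f" and y: "y \<in> edom f"
    and der: "((\<lambda>z. real_of_ereal (f z)) has_derivative (\<lambda>h. inner g h)) (at y0)"
  shows "real_of_ereal (f y0) + inner g (y - y0) \<le> real_of_ereal (f y)"
proof -
  define \<phi> where "\<phi> t = real_of_ereal (f (y0 + t *\<^sub>R (y - y0)))" for t
  have l: "((\<lambda>t. y0 + t *\<^sub>R (y - y0)) has_derivative (\<lambda>t. t *\<^sub>R (y - y0))) (at 0)"
    by (auto intro!: derivative_eq_intros)
  have der': "((\<lambda>z. real_of_ereal (f z)) has_derivative (\<lambda>h. inner g h)) (at ((\<lambda>t. y0 + t *\<^sub>R (y - y0)) 0))"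
    using der by simp
  have "(\<phi> has_derivative ((\<lambda>h. inner g h) \<circ> (\<lambda>t. t *\<^sub>R (y - y0)))) (at 0)"
    using diff_chain_at[OF l der'] unfolding \<phi>_def o_def by simp
  moreover have "((\<lambda>h. inner g h) \<circ> (\<lambda>t. t *\<^sub>R (y - y0))) = (*) (inner g (y - y0))"
    by (auto simp: o_def fun_eq_iff)
  ultimately have "(\<phi> has_field_derivative (inner g (y - y0))) (at 0)"
    unfolding has_field_derivative_def by simp
  then have "(\<phi> has_field_derivative (inner g (y - y0))) (at 0 within {0<..})"
    by (rule has_field_derivative_at_within)
  then have lim: "((\<lambda>t. (\<phi> t - \<phi> 0) / (t - 0)) \<longlongrightarrow> inner g (y - y0)) (at_right 0)"
    unfolding has_field_derivative_iff by simp
  have ev: "eventually (\<lambda>t. (\<phi> t - \<phi> 0) / (t - 0) \<le> real_of_ereal (f y) - real_of_ereal (f y0)) (at_right (0::real))"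
    unfolding eventually_at_right_field
  proof (intro exI[of _ 1] conjI allI impI)
    fix t :: real assume t: "0 < t" "t < 1"
    have "y0 + t *\<^sub>R (y - y0) = (1 - t) *\<^sub>R y0 + t *\<^sub>R y" by (simp add: algebra_simps)
    then have "\<phi> t \<le> (1-t) * real_of_ereal (f y0) + t * real_of_ereal (f y)"
      unfolding \<phi>_def using cpc_conv'(2)[OF h y0 y, of t] t by simp
    moreover have "\<phi> 0 = real_of_ereal (f y0)" unfolding \<phi>_def by simp
    ultimately have "\<phi> t - \<phi> 0 \<le> t * (real_of_ereal (f y) - real_of_ereal (f y0))"
      by (simp add: algebra_simps)
    then show "(\<phi> t - \<phi> 0) / (t - 0) \<le> real_of_ereal (f y) - real_of_ereal (f y0)"
      using t by (simp add: divide_le_eq mult.commute)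
  qed simp
  have "inner g (y - y0) \<le> real_of_ereal (f y) - real_of_ereal (f y0)"
    by (rule tendsto_upperbound[OF lim ev]) simp
  then show ?thesis by simp
qed

lemma fconj_grad:
  assumes h: "closed_proper_convex f" and y0: "y0 \<in> edom f"
    and der: "((\<lambda>z. real_of_ereal (f z)) has_derivative (\<lambda>h. inner g h)) (at y0)"
  shows "fconj f g = ereal (inner g y0 - real_of_ereal (f y0))"
proof -
  obtain r0 where r0: "f y0 = ereal r0" using cpc_fin[OF h y0] by blast
  have "fconj f g \<le> ereal (inner g y0 - r0)"
    unfolding fconj_def
  proof (rule SUP_least)
    fix x assume "x \<in> (UNIV :: 'a set)"
    show "ereal (inner g x) - f x \<le> ereal (inner g y0 - r0)"
    proof (cases "x \<in> edom f")
      case True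
      obtain rx where rx: "f x = ereal rx" using cpc_fin[OF h True] by blast
      have "r0 + inner g (x - y0) \<le> rx" using grad_ineq[OF h y0 True der] rx r0 by simp
      then show ?thesis using rx by (simp add: inner_diff_right)
    next
      case False
      then have "f x = \<infinity>" unfolding edom_def by (simp add: top.not_eq_extremum)
      then show ?thesis by simp
    qed
  qed
  moreover have "ereal (inner g y0 - r0) \<le> fconj f g"
    unfolding fconj_def using r0 by (intro SUP_upper2[of y0]) simp_all
  ultimately show ?thesis using r0 by simp
qed

lemma argmin_dom:
  assumes h: "closed_proper_convex \<Psi>" and s: "s \<in> argmin_lin g \<Psi>"
  shows "s \<in> edom \<Psi>"
proof (rule ccontr)
  assume "s \<notin> edom \<Psi>"
  then have inf: "\<Psi> s = \<infinity>" unfolding edom_def by (simp add: top.not_eq_extremum)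
  obtain y where y: "y \<in> edom \<Psi>" using h unfolding closed_proper_convex_def by blast
  obtain ry where ry: "\<Psi> y = ereal ry" using cpc_fin[OF h y] by blast
  have "ereal (inner g s) + \<Psi> s \<le> ereal (inner g y) + \<Psi> y" using s unfolding argmin_lin_def by blast
  then show False using inf ry by simp
qed

lemma argmin_ineq:
  assumes h: "closed_proper_convex \<Psi>" and s: "s \<in> argmin_lin g \<Psi>" and y: "y \<in> edom \<Psi>"
  shows "inner g s + real_of_ereal (\<Psi> s) \<le> inner g y + real_of_ereal (\<Psi> y)"
proof -
  obtain ry where ry: "\<Psi> y = ereal ry" using cpc_fin[OF h y] by blast
  obtain rs where rs: "\<Psi> s = ereal rs" using cpc_fin[OF h argmin_dom[OF h s]] by blast
  have "ereal (inner g s) + \<Psi> s \<le> ereal (inner g y) + \<Psi> y" using s unfolding argmin_lin_def by blast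
  then show ?thesis using ry rs by simp
qed

lemma fconj_argmin:
  assumes h: "closed_proper_convex \<Psi>" and s: "s \<in> argmin_lin g \<Psi>"
  shows "fconj \<Psi> (-g) = ereal (- inner g s - real_of_ereal (\<Psi> s))"
proof -
  have sd: "s \<in> edom \<Psi>" by (rule argmin_dom[OF h s])
  obtain rs where rs: "\<Psi> s = ereal rs" using cpc_fin[OF h sd] by blast
  have "fconj \<Psi> (-g) \<le> ereal (- inner g s - rs)"
    unfolding fconj_def
  proof (rule SUP_least)
    fix x assume "x \<in> (UNIV :: 'a set)"
    show "ereal (inner (-g) x) - \<Psi> x \<le> ereal (- inner g s - rs)"
    proof (cases "x \<in> edom \<Psi>")
      case True
      obtain rx where rx: "\<Psi> x = ereal rx" using cpc_fin[OF h True] by blast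
      have "inner g s + rs \<le> inner g x + rx"
        using argmin_ineq[OF h s True] rx rs by simp
      then show ?thesis using rx by simp
    next
      case False
      then have "\<Psi> x = \<infinity>" unfolding edom_def by (simp add: top.not_eq_extremum)
      then show ?thesis by simp
    qed
  qed
  moreover have "ereal (- inner g s - rs) \<le> fconj \<Psi> (-g)"
    unfolding fconj_def using rs by (intro SUP_upper2[of s]) simp_all
  ultimately show ?thesis using rs by simp
qed

lemma argmin_subdiff:
  assumes h: "closed_proper_convex \<Psi>" and s: "s \<in> argmin_lin g \<Psi>"
  shows "s \<in> esubdiff (fconj \<Psi>) (-g)"
  unfolding esubdiff_def
proof (intro CollectI conjI allI)
  have sd: "s \<in> edom \<Psi>" by (rule argmin_dom[OF h s])
  obtain rs where rs: "\<Psi> s = ereal rs" using cpc_fin[OF h sd] by blast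
  show "\<bar>fconj \<Psi> (- g)\<bar> \<noteq> \<infinity>" using fconj_argmin[OF h s] by simp
  fix v
  have "ereal (inner v s) - \<Psi> s \<le> fconj \<Psi> v" unfolding fconj_def by (rule SUP_upper) simp
  moreover have "ereal (inner v s) - \<Psi> s = fconj \<Psi> (- g) + ereal (inner s (v - - g))"
    using fconj_argmin[OF h s] rs by (simp add: inner_add_right inner_commute)
  ultimately show "fconj \<Psi> (- g) + ereal (inner s (v - - g)) \<le> fconj \<Psi> v" by simp
qed


lemma bern_powr:
  fixes y p :: real assumes "0 \<le> y" "y < 1" "0 < p"
  shows "1 + p * y \<le> (1 - y) powr (- p)"
proof -
  have "ln (1 - y) \<le> - y" using ln_le_minus_one[of "1-y"] assms by simp
  then have "p * y \<le> p * (- ln (1 - y))" using assms by (intro mult_left_mono) auto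
  then have "p * y \<le> - p * ln (1 - y)" by simp
  also have "1 + - p * ln (1 - y) \<le> exp (- p * ln (1 - y))" by (rule exp_ge_add_one_self)
  then have "1 + p*y \<le> exp (- p * ln (1 - y))" using \<open>p * y \<le> - p * ln (1 - y)\<close> by linarith
  then show ?thesis using assms by (simp add: powr_def)
qed

lemma min_eq1:
  fixes C T g q e :: real
  assumes "C > 0" "T = 1 / C" "g > T" "e \<ge> 0"
  shows "min 1 ((C * g) powr e) = 1"
proof -
  have "C * T < C * g" using assms by (intro mult_strict_left_mono) auto
  moreover have "C * T = 1" using assms by simp
  ultimately have "1 < C * g" by simp
  then have "1 \<le> C * g" by simp
  then show ?thesis using ge_one_powr_ge_zero[of "C*g" e] assms by simp
qed

lemma rates:
  fixes G :: "nat \<Rightarrow> real" and b C T q r :: real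
  assumes Gnn: "\<forall>k. 0 \<le> G k"
    and step: "\<forall>k. G (Suc k) \<le> G k * (1 - b * min 1 ((C * pw (G k) (1 - r)) powr (1 / (q - 1))))"
    and b: "0 < b" "b < 1" and C: "C > 0" and T: "T = 1 / C" and q: "q > 1" and r: "0 \<le> r" "r \<le> 1"
  shows "(r = 1 \<longrightarrow> (\<forall>k. G k \<le> G 0 * (1 - b * min 1 (C powr (1 / (q - 1)))) ^ k))
       \<and> (r < 1 \<longrightarrow>
            (\<exists>k. G k powr (1 - r) \<le> T) \<and>
            (\<forall>k0. G k0 powr (1 - r) \<le> T \<and>
                  (\<forall>j<k0. \<not> (G j powr (1 - r) \<le> T)) \<longrightarrow>
               (\<forall>k\<le>k0. G k \<le> G 0 * (1 - b) ^ k) \<and>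
               (\<forall>k\<ge>k0. G k \<le> (G k0 powr ((r - 1) / (q - 1))
                    + (1 - r) * b / (q - 1) * C powr (1 / (q - 1))
                      * real (k - k0)) powr ((q - 1) / (r - 1)))))"
proof (intro conjI impI)
  define m where "m k = min 1 ((C * pw (G k) (1 - r)) powr (1 / (q - 1)))" for k
  have m01: "0 \<le> m k" "m k \<le> 1" for k unfolding m_def by auto
  have st: "G (Suc k) \<le> G k * (1 - b * m k)" for k using step m_def by simp
  have bm: "b * m k \<le> b" "0 \<le> b * m k" for k
    using m01[of k] b by (simp_all add: mult_left_le)
  have fac: "1 - b \<le> 1 - b * m k" "1 - b * m k \<le> 1" for k
    using bm[of k] by simp_all
  have dec1: "G (Suc k) \<le> G k" for k
  proof -
    have "G k * (1 - b * m k) \<le> G k" using Gnn fac(2)[of k] by (simp add: mult_left_le)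
    then show ?thesis using st[of k] by simp
  qed
  have dec: "k \<le> j \<Longrightarrow> G j \<le> G k" for k j
  proof (induction j rule: dec_induct)
    case (step j) then show ?case using dec1[of j] by linarith
  qed simp
  {
    assume r1: "r = 1"
    have mr1: "m k = min 1 (C powr (1 / (q - 1)))" for k unfolding m_def r1 pw_def by simp
    have st1: "G (Suc k) \<le> G k * (1 - b * min 1 (C powr (1 / (q - 1))))" for k using st[of k] mr1[of k] by simp
    have "b * min 1 (C powr (1 / (q - 1))) \<le> b" using bm(1)[of 0] mr1[of 0] by simp
    then have nn: "0 \<le> 1 - b * min 1 (C powr (1 / (q - 1)))" using b by linarith
    show "\<forall>k. G k \<le> G 0 * (1 - b * min 1 (C powr (1 / (q - 1)))) ^ k"
    proof
      fix k show "G k \<le> G 0 * (1 - b * min 1 (C powr (1 / (q - 1)))) ^ k"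
      proof (induction k)
        case (Suc k)
        have "G k * (1 - b * min 1 (C powr (1 / (q - 1))))
          \<le> G 0 * (1 - b * min 1 (C powr (1 / (q - 1)))) ^ k * (1 - b * min 1 (C powr (1 / (q - 1))))"
          using Suc nn by (rule mult_right_mono)
        then show ?case using st1[of k] by (simp add: mult_ac)
      qed simp
    qed
  }
  assume r1: "r < 1"
  have pwG: "pw (G k) (1 - r) = G k powr (1 - r)" for k unfolding pw_def using r1 by simp
  have e0: "0 \<le> 1 / (q - 1)" using q by simp
  have big: "G k powr (1 - r) > T \<Longrightarrow> m k = 1" for k
    unfolding m_def pwG using min_eq1[OF C T _ e0] by blast
  have Tpos: "T > 0" using T C by simp
  show "\<exists>k. G k powr (1 - r) \<le> T"
  proof (rule ccontr)
    assume "\<not> ?thesis"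
    then have all: "G k powr (1 - r) > T" for k by (simp add: not_le)
    have geo: "G k \<le> G 0 * (1 - b) ^ k" for k
    proof (induction k)
      case (Suc k)
      have "G (Suc k) \<le> G k * (1 - b)" using st[of k] big[OF all[of k]] by simp
      also have "\<dots> \<le> G 0 * (1 - b) ^ k * (1 - b)" using Suc b by (simp add: mult_right_mono)
      finally show ?case by (simp add: mult_ac)
    qed simp
    define \<epsilon> where "\<epsilon> = T powr (1 / (1 - r))"
    have epos: "\<epsilon> > 0" unfolding \<epsilon>_def using Tpos by simp
    have "(\<lambda>k. G 0 * (1 - b) ^ k) \<longlonglongrightarrow> G 0 * 0"
      by (intro tendsto_mult tendsto_const LIMSEQ_power_zero) (use b in simp)
    then have "eventually (\<lambda>k. G 0 * (1 - b) ^ k < \<epsilon>) sequentially"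
      using epos by (intro order_tendstoD(2)) simp_all
    then obtain k where k: "G 0 * (1 - b) ^ k < \<epsilon>" by (auto simp: eventually_sequentially)
    have "G k < \<epsilon>" using geo[of k] k by simp
    then have "G k powr (1 - r) < \<epsilon> powr (1 - r)"
      using Gnn r1 by (intro powr_less_mono2) auto
    also have "\<epsilon> powr (1 - r) = T" unfolding \<epsilon>_def powr_powr using r1 Tpos by simp
    finally show False using all[of k] by simp
  qed
  show "\<forall>k0. G k0 powr (1 - r) \<le> T \<and> (\<forall>j<k0. \<not> (G j powr (1 - r) \<le> T)) \<longrightarrow>
               (\<forall>k\<le>k0. G k \<le> G 0 * (1 - b) ^ k) \<and>
               (\<forall>k\<ge>k0. G k \<le> (G k0 powr ((r - 1) / (q - 1))
                    + (1 - r) * b / (q - 1) * C powr (1 / (q - 1))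
                      * real (k - k0)) powr ((q - 1) / (r - 1)))"
  proof (rule allI, rule impI, rule conjI)
    fix k0 assume H: "G k0 powr (1 - r) \<le> T \<and> (\<forall>j<k0. \<not> (G j powr (1 - r) \<le> T))"
    show "\<forall>k\<le>k0. G k \<le> G 0 * (1 - b) ^ k"
    proof (intro allI impI)
      fix k assume "k \<le> k0"
      then show "G k \<le> G 0 * (1 - b) ^ k"
      proof (induction k)
        case (Suc k)
        then have "k < k0" by simp
        then have "\<not> G k powr (1 - r) \<le> T" using H by blast
        then have "m k = 1" using big by simp
        then have "G (Suc k) \<le> G k * (1 - b)" using st[of k] by simp
        also have "\<dots> \<le> G 0 * (1 - b) ^ k * (1 - b)" using Suc b by (simp add: mult_right_mono)
        finally show ?case by (simp add: mult_ac)
      qed simp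
    qed
    define p where "p = (1 - r) / (q - 1)"
    define K where "K = C powr (1 / (q - 1))"
    have ppos: "p > 0" unfolding p_def using r1 q by simp
    have Kpos: "K > 0" unfolding K_def using C by simp
    have msmall: "m j = K * G j powr p" if "j \<ge> k0" for j
    proof -
      have "G j \<le> G k0" using dec that by blast
      then have "G j powr (1 - r) \<le> G k0 powr (1 - r)" using Gnn r1 by (intro powr_mono2) auto
      then have "G j powr (1 - r) \<le> T" using H by simp
      then have "C * G j powr (1 - r) \<le> 1" using T C by (simp add: field_simps)
      then have "(C * G j powr (1 - r)) powr (1 / (q - 1)) \<le> 1"
        using C e0 by (intro powr_le1) auto
      then have "m j = (C * G j powr (1 - r)) powr (1 / (q - 1))" unfolding m_def pwG by simp
      also have "\<dots> = K * G j powr p" unfolding K_def p_def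
        using C Gnn by (simp add: powr_mult powr_powr)
      finally show ?thesis .
    qed
    have claim: "G (k0 + n) = 0 \<or> G k0 powr (- p) + p * (b * K) * real n \<le> G (k0 + n) powr (- p)" for n
    proof (induction n)
      case 0 then show ?case by simp
    next
      case (Suc n)
      show ?case
      proof (cases "G (k0 + Suc n) = 0")
        case False
        let ?g = "G (k0 + n)" and ?g' = "G (k0 + Suc n)"
        have g'pos: "?g' > 0" using False Gnn by (simp add: order_less_le)
        have gpos: "?g > 0" using dec1[of "k0+n"] g'pos by simp
        have IH: "G k0 powr (- p) + p * (b * K) * real n \<le> ?g powr (- p)" using Suc gpos by simp
        define y where "y = b * m (k0 + n)"
        have y: "0 \<le> y" "y < 1" unfolding y_def using bm[of "k0+n"] b by (linarith, linarith)
        have "?g' \<le> ?g * (1 - y)" using st[of "k0+n"] unfolding y_def by simp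
        then have "(?g * (1 - y)) powr (- p) \<le> ?g' powr (- p)"
          using ppos g'pos by (intro powr_mono2') auto
        also have "(?g * (1 - y)) powr (- p) = ?g powr (- p) * (1 - y) powr (- p)"
          using gpos y by (simp add: powr_mult)
        finally have A: "?g powr (- p) * (1 - y) powr (- p) \<le> ?g' powr (- p)" .
        have "?g powr (- p) * (1 + p * y) \<le> ?g powr (- p) * (1 - y) powr (- p)"
          using bern_powr[OF y ppos] by (simp add: mult_left_mono)
        moreover have "?g powr (- p) * (1 + p * y) = ?g powr (- p) + p * (b * K)"
        proof -
          have "?g powr (- p) * ?g powr p = 1" using gpos by (simp add: powr_add[symmetric])
          then show ?thesis unfolding y_def msmall[of "k0+n", simplified]
            by (simp add: algebra_simps)
        qed
        ultimately have "?g powr (- p) + p * (b * K) \<le> ?g' powr (- p)" using A by linarith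
        then show ?thesis using IH by (simp add: algebra_simps)
      qed simp
    qed
    show "\<forall>k\<ge>k0. G k \<le> (G k0 powr ((r - 1) / (q - 1))
                    + (1 - r) * b / (q - 1) * C powr (1 / (q - 1))
                      * real (k - k0)) powr ((q - 1) / (r - 1))"
    proof (intro allI impI)
      fix k assume kk: "k0 \<le> k"
      then obtain n where n: "k = k0 + n" using le_Suc_ex by blast
      have e1: "(r - 1) / (q - 1) = - p" unfolding p_def minus_divide_left by simp
      have e2: "(q - 1) / (r - 1) = - (1 / p)" unfolding p_def using r1 q by (simp add: field_simps)
      have e3: "(1 - r) * b / (q - 1) * C powr (1 / (q - 1)) = p * (b * K)"
        unfolding p_def K_def using q by (simp add: field_simps)
      show "G k \<le> (G k0 powr ((r - 1) / (q - 1))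
                    + (1 - r) * b / (q - 1) * C powr (1 / (q - 1))
                      * real (k - k0)) powr ((q - 1) / (r - 1))"
        unfolding e1 e2 e3 n
      proof (cases "G (k0 + n) = 0")
        case False
        have gpos: "G (k0+n) > 0" using False Gnn by (simp add: order_less_le)
        have "G (k0+n) \<le> G k0" using dec by simp
        then have "G k0 > 0" using gpos by simp
        then have X: "0 < G k0 powr (- p) + p * (b * K) * real n" using ppos b Kpos
          by (intro add_pos_nonneg) auto
        have Y: "G k0 powr (- p) + p * (b * K) * real n \<le> G (k0+n) powr (- p)"
          using claim[of n] False by simp
        have "(G (k0+n) powr (- p)) powr (- (1 / p)) \<le> (G k0 powr (- p) + p * (b * K) * real n) powr (- (1 / p))"
          using X Y ppos by (intro powr_mono2') auto
        moreover have "(G (k0+n) powr (- p)) powr (- (1 / p)) = G (k0 + n)"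
          using gpos ppos by (simp add: powr_powr)
        ultimately show "G (k0 + n) \<le> (G k0 powr (- p) + p * (b * K) * real (k0 + n - k0)) powr (- (1 / p))"
          by simp
      qed simp
    qed
  qed
qed


lemma pw_mult:
  assumes "0 \<le> g" "0 \<le> r" "r \<le> 1"
  shows "pw g (1 - r) * pw g r = g"
proof -
  consider "r = 0" | "r = 1" | "0 < r \<and> r < 1" using assms by linarith
  then show ?thesis
  proof cases
    case 3
    then have "pw g (1 - r) * pw g r = g powr (1 - r) * g powr r"
      unfolding pw_def by simp
    also have "\<dots> = g powr ((1 - r) + r)" by (rule powr_add[symmetric])
    also have "\<dots> = g" using assms by simp
    finally show ?thesis .
  qed (use assms in \<open>auto simp: pw_def\<close>)
qed

lemma growth_cond:
  fixes gp M q r c t D :: real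
  assumes gp: "0 \<le> gp" and M: "M > 0" and q: "q > 1" and t: "0 \<le> t"
    and tm: "t \<le> min 1 ((q * (1 - c) / M * pw gp (1 - r)) powr (1 / (q - 1)))"
    and c: "c < 1" and r: "0 \<le> r" "r \<le> 1"
    and D: "D \<le> M * t powr q / q * pw gp r"
  shows "D \<le> (1 - c) * t * gp"
proof (cases "t = 0")
  case True then show ?thesis using D by simp
next
  case False
  then have tp: "t > 0" using t by simp
  define A where "A = q * (1 - c) / M * pw gp (1 - r)"
  have A0: "0 \<le> A" unfolding A_def pw_def using q c M by auto
  have "t \<le> A powr (1 / (q - 1))" using tm unfolding A_def by simp
  then have "t powr (q - 1) \<le> (A powr (1 / (q - 1))) powr (q - 1)"
    using tp q by (intro powr_mono2) auto
  also have "\<dots> = A" using A0 q by (simp add: powr_powr)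
  finally have tA: "t powr (q - 1) \<le> A" .
  have tq: "t powr q = t * t powr (q - 1)"
    using tp by (metis powr_add powr_one add.commute diff_add_cancel less_imp_le)
  have pr: "0 \<le> pw gp r" unfolding pw_def by auto
  have "M * t powr q / q * pw gp r = (M / q * t * pw gp r) * t powr (q - 1)"
    unfolding tq by (simp add: field_simps)
  also have "\<dots> \<le> (M / q * t * pw gp r) * A"
    using tA M q tp pr by (intro mult_left_mono) auto
  also have "\<dots> = (1 - c) * t * (pw gp (1 - r) * pw gp r)"
    unfolding A_def using M q by (simp add: field_simps)
  also have "\<dots> = (1 - c) * t * gp" using pw_mult[OF gp r] by simp
  finally show ?thesis using D by simp
qed


lemma step_lemma:
  fixes f \<Psi> :: "'a::euclidean_space \<Rightarrow> ereal" and gradf :: "'a \<Rightarrow> 'a"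
    and xk sk :: 'a and th thh c \<rho> q r M :: real
  assumes f_cpc: "closed_proper_convex f" and Psi_cpc: "closed_proper_convex \<Psi>"
    and A1: "\<forall>y \<in> edom \<Psi>. y \<in> interior (edom f) \<and>
               ((\<lambda>z. real_of_ereal (f z)) has_derivative (\<lambda>h. inner (gradf y) h)) (at y)"
    and xk: "xk \<in> edom \<Psi>" and sk: "sk \<in> argmin_lin (gradf xk) \<Psi>"
    and c: "0 < c" "c < 1" and rho: "0 < \<rho>" and th: "th \<in> {0..1}"
    and thh: "thh = (GREATEST t. t \<in> {0..1} \<and>
          (1 - t) * dgap f \<Psi> xk (gradf xk) + Dcal f gradf \<Psi> xk sk t
            \<le> (1 - c * t) * dgap f \<Psi> xk (gradf xk))"
    and tb: "\<rho> * thh \<le> th" "th \<le> thh"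
    and q: "q > 1" and r: "0 \<le> r" "r \<le> 1"
    and grow: "growth f gradf \<Psi> q r M"
  shows "0 \<le> dgap f \<Psi> xk (gradf xk)"
    "real_of_ereal (f ((1 - th) *\<^sub>R xk + th *\<^sub>R sk)) + real_of_ereal (\<Psi> ((1 - th) *\<^sub>R xk + th *\<^sub>R sk))
      - (real_of_ereal (f xk) + real_of_ereal (\<Psi> xk))
     \<le> - (c * \<rho>) * min 1 ((q * (1 - c) / M * pw (dgap f \<Psi> xk (gradf xk)) (1 - r)) powr (1 / (q - 1)))
        * dgap f \<Psi> xk (gradf xk)"
proof -
  define g where "g = gradf xk"
  define gp where "gp = dgap f \<Psi> xk (gradf xk)"
  define d where "d = sk - xk"
  define seg where "seg t = xk + t *\<^sub>R d" for t
  define \<phi> where "\<phi> t = real_of_ereal (f (seg t))" for t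
  define \<psi> where "\<psi> t = real_of_ereal (\<Psi> (seg t))" for t
  define Dc where "Dc t = Dcal f gradf \<Psi> xk sk t" for t
  have skd: "sk \<in> edom \<Psi>" by (rule argmin_dom[OF Psi_cpc sk])
  have segc: "seg t = (1 - t) *\<^sub>R xk + t *\<^sub>R sk" for t unfolding seg_def d_def by (simp add: algebra_simps)
  have seg0: "seg 0 = xk" and seg1: "seg 1 = sk" unfolding seg_def d_def by simp_all
  have segdom: "seg t \<in> edom \<Psi>" if "t \<in> {0..1}" for t
    unfolding segc using cpc_conv'(1)[OF Psi_cpc xk skd] that by auto
  have domf: "y \<in> edom f" if "y \<in> edom \<Psi>" for y using A1 that interior_subset by blast
  have der: "((\<lambda>z. real_of_ereal (f z)) has_derivative (\<lambda>h. inner (gradf y) h)) (at y)"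
    if "y \<in> edom \<Psi>" for y using A1 that by blast
  have Deq: "Dc t = \<phi> t - \<phi> 0 - t * inner g d + \<psi> t - (1 - t) * \<psi> 0 - t * \<psi> 1" for t
    unfolding Dc_def Dcal_def bregman_def \<phi>_def \<psi>_def seg0 seg1 g_def
    by (simp add: seg_def d_def inner_diff_right)
  have fcg: "fconj f g = ereal (inner g xk - real_of_ereal (f xk))"
    unfolding g_def by (rule fconj_grad[OF f_cpc domf[OF xk] der[OF xk]])
  have fcP: "fconj \<Psi> (- g) = ereal (- inner g sk - real_of_ereal (\<Psi> sk))"
    unfolding g_def by (rule fconj_argmin[OF Psi_cpc sk])
  have gpeq: "gp = \<psi> 0 - \<psi> 1 - inner g d"
  proof -
    have "f xk + \<Psi> xk + fconj f g + fconj \<Psi> (- g)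
       = ereal (real_of_ereal (f xk) + real_of_ereal (\<Psi> xk) + (inner g xk - real_of_ereal (f xk))
                 + (- inner g sk - real_of_ereal (\<Psi> sk)))"
      using cpc_fin[OF f_cpc domf[OF xk]] cpc_fin[OF Psi_cpc xk] fcg fcP
      by (metis plus_ereal.simps(1))
    then show ?thesis unfolding gp_def dgap_def g_def[symmetric] \<psi>_def seg0 seg1 d_def
      by (simp add: inner_diff_right)
  qed
  have gp0: "0 \<le> gp"
    using argmin_ineq[OF Psi_cpc sk xk] unfolding gpeq \<psi>_def seg0 seg1 d_def g_def
    by (simp add: inner_diff_right)
  then show "0 \<le> dgap f \<Psi> xk (gradf xk)" unfolding gp_def .
  have D0: "Dc 0 = 0" unfolding Deq by simp
  have conv: "Dc t \<le> (t / u) * Dc u" if tu: "0 \<le> t" "t \<le> u" "u \<le> 1" "0 < u" for t u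
  proof -
    define l where "l = t / u"
    have l: "0 \<le> l" "l \<le> 1" "t = l * u" unfolding l_def using tu by auto
    have su: "seg u \<in> edom \<Psi>" using segdom tu by auto
    have e: "(1 - l) *\<^sub>R xk + l *\<^sub>R seg u = seg t" unfolding seg_def l(3) by (simp add: algebra_simps)
    have i1: "\<phi> t \<le> (1 - l) * \<phi> 0 + l * \<phi> u"
      using cpc_conv'(2)[OF f_cpc domf[OF xk] domf[OF su] l(1,2)] unfolding e \<phi>_def seg0 .
    have i2: "\<psi> t \<le> (1 - l) * \<psi> 0 + l * \<psi> u"
      using cpc_conv'(2)[OF Psi_cpc xk su l(1,2)] unfolding e \<psi>_def seg0 .
    have "l * Dc u = (1 - l) * \<phi> 0 + l * \<phi> u - \<phi> 0 - t * inner g d + (1 - l) * \<psi> 0 + l * \<psi> u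
                     - (1 - t) * \<psi> 0 - t * \<psi> 1"
      unfolding Deq l(3) by (simp add: algebra_simps)
    then show ?thesis unfolding Deq l_def[symmetric] using i1 i2 by linarith
  qed
  define P where "P t \<longleftrightarrow> t \<in> {0..1} \<and> (1 - t) * gp + Dc t \<le> (1 - c * t) * gp" for t
  have Pthh: "thh = (GREATEST t. P t)" unfolding thh P_def gp_def Dc_def ..
  define S where "S = {t. P t}"
  define h where "h t = (1 - c * t) * gp - (1 - t) * gp - (\<phi> t - \<phi> 0 - t * inner g d)
                        + (1 - t) * \<psi> 0 + t * \<psi> 1" for t
  define E where "E = {(x, t::real). \<Psi> x \<le> ereal t}"
  have closedE: "closed E" using Psi_cpc unfolding closed_proper_convex_def E_def by blast
  have Seq: "S = {0..1} \<inter> (\<lambda>t. (seg t, h t)) -` E"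
  proof (intro set_eqI iffI)
    fix t assume "t \<in> S"
    then have t: "t \<in> {0..1}" and ineq: "(1 - t) * gp + Dc t \<le> (1 - c * t) * gp"
      unfolding S_def P_def by auto
    have "\<psi> t \<le> h t" using ineq unfolding Deq h_def by linarith
    then have "\<Psi> (seg t) \<le> ereal (h t)" using cpc_fin[OF Psi_cpc segdom[OF t]] unfolding \<psi>_def
      by (metis ereal_less_eq(3))
    then show "t \<in> {0..1} \<inter> (\<lambda>t. (seg t, h t)) -` E" using t unfolding E_def by simp
  next
    fix t assume "t \<in> {0..1} \<inter> (\<lambda>t. (seg t, h t)) -` E"
    then have t: "t \<in> {0..1}" and e: "\<Psi> (seg t) \<le> ereal (h t)" unfolding E_def by auto
    have "\<psi> t \<le> h t" using e cpc_fin[OF Psi_cpc segdom[OF t]] unfolding \<psi>_def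
      by (metis ereal_less_eq(3))
    then have "(1 - t) * gp + Dc t \<le> (1 - c * t) * gp" unfolding Deq h_def by linarith
    then show "t \<in> S" using t unfolding S_def P_def by auto
  qed
  have contphi: "continuous_on {0..1} \<phi>"
  proof (rule continuous_at_imp_continuous_on, rule ballI)
    fix t :: real assume t: "t \<in> {0..1}"
    have c1: "isCont seg t" unfolding seg_def by (intro continuous_intros)
    have c2: "isCont (\<lambda>z. real_of_ereal (f z)) (seg t)"
      by (rule has_derivative_continuous[OF der[OF segdom[OF t]]])
    have "isCont ((\<lambda>z. real_of_ereal (f z)) \<circ> seg) t" by (rule continuous_at_compose[OF c1 c2])
    then show "isCont \<phi> t" unfolding \<phi>_def o_def .
  qed
  have conth: "continuous_on {0..1} (\<lambda>t. (seg t, h t))"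
    unfolding seg_def h_def by (intro continuous_intros contphi)
  have closedS: "closed S" unfolding Seq
    by (rule continuous_closed_preimage[OF conth closed_atLeastAtMost closedE])
  have P0: "P 0" unfolding P_def using D0 by simp
  have Ssub: "S \<subseteq> {0..1}" unfolding S_def P_def by auto
  have bdd: "bdd_above S" using Ssub by (meson bdd_above_Icc bdd_above_mono)
  have SupS: "Sup S \<in> S" using closed_contains_Sup[OF _ bdd closedS] P0 unfolding S_def by auto
  have "(GREATEST t. P t) = Sup S"
    by (rule Greatest_equality) (use SupS bdd in \<open>auto simp: S_def intro: cSup_upper\<close>)
  then have thhS: "thh = Sup S" using Pthh by simp
  have Pthh': "P thh" using SupS thhS unfolding S_def by simp
  have upper: "t \<le> thh" if "P t" for t using that bdd thhS unfolding S_def by (auto intro: cSup_upper)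
  have Pequiv: "P t \<longleftrightarrow> t \<in> {0..1} \<and> Dc t \<le> (1 - c) * t * gp" for t
    unfolding P_def by (auto simp: algebra_simps)
  define m where "m = min 1 ((q * (1 - c) / M * pw gp (1 - r)) powr (1 / (q - 1)))"
  have m01: "0 \<le> m" "m \<le> 1" unfolding m_def by auto
  have Mpos: "M > 0" using grow unfolding growth_def by simp
  have subd: "sk \<in> esubdiff (fconj \<Psi>) (- gradf xk)" by (rule argmin_subdiff[OF Psi_cpc sk])
  have Dm: "Dc m \<le> M * m powr q / q * pw gp r"
    using grow xk subd m01 unfolding growth_def Dc_def gp_def by auto
  have "m \<le> min 1 ((q * (1 - c) / M * pw gp (1 - r)) powr (1 / (q - 1)))" by (simp add: m_def)
  then have "Dc m \<le> (1 - c) * m * gp"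
    by (rule growth_cond[OF gp0 Mpos q m01(1) _ c(2) r Dm])
  then have "P m" using Pequiv m01 by simp
  then have mth: "m \<le> thh" by (rule upper)
  have thh0: "0 \<le> thh" using upper[OF P0] .
  have Dth: "Dc th \<le> (1 - c) * th * gp"
  proof (cases "thh = 0")
    case True then have "th = 0" using tb th by auto
    then show ?thesis using D0 by simp
  next
    case False
    then have tp: "thh > 0" using thh0 by simp
    have "thh \<le> 1" using Pthh' unfolding P_def by simp
    then have "Dc th \<le> (th / thh) * Dc thh" using conv[of th thh] th tb tp by auto
    also have "\<dots> \<le> (th / thh) * ((1 - c) * thh * gp)"
      using Pthh' Pequiv th tp by (intro mult_left_mono) auto
    also have "\<dots> = (1 - c) * th * gp" using tp by (simp add: field_simps)
    finally show ?thesis .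
  qed
  have "real_of_ereal (f (seg th)) + real_of_ereal (\<Psi> (seg th)) - (real_of_ereal (f xk) + real_of_ereal (\<Psi> xk))
     = Dc th - th * gp"
    unfolding Deq gpeq \<phi>_def \<psi>_def seg0 seg1 by (simp add: algebra_simps)
  also have "\<dots> \<le> - c * th * gp" using Dth by (simp add: algebra_simps)
  also have "\<dots> \<le> - c * (\<rho> * thh) * gp"
    using tb c gp0 by (intro mult_right_mono mult_left_mono_neg) auto
  also have "\<dots> \<le> - c * (\<rho> * m) * gp"
    using mth c gp0 rho by (intro mult_right_mono mult_left_mono_neg mult_left_mono) auto
  finally show "real_of_ereal (f ((1 - th) *\<^sub>R xk + th *\<^sub>R sk)) + real_of_ereal (\<Psi> ((1 - th) *\<^sub>R xk + th *\<^sub>R sk))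
      - (real_of_ereal (f xk) + real_of_ereal (\<Psi> xk))
     \<le> - (c * \<rho>) * min 1 ((q * (1 - c) / M * pw (dgap f \<Psi> xk (gradf xk)) (1 - r)) powr (1 / (q - 1)))
        * dgap f \<Psi> xk (gradf xk)"
    unfolding segc m_def gp_def by (simp add: mult_ac)
qed


theorem theorem2:
  fixes f \<Psi> :: "'a::euclidean_space \<Rightarrow> ereal" and gradf :: "'a \<Rightarrow> 'a"
    and x s :: "nat \<Rightarrow> 'a" and \<theta> \<theta>h G :: "nat \<Rightarrow> real" and c \<rho> q r M :: real
  assumes f_cpc: "closed_proper_convex f" and Psi_cpc: "closed_proper_convex \<Psi>"
    and A1: "\<forall>y \<in> edom \<Psi>. y \<in> interior (edom f) \<and>
               ((\<lambda>z. real_of_ereal (f z)) has_derivative (\<lambda>h. inner (gradf y) h)) (at y)"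
    and A2: "\<forall>y \<in> edom \<Psi>. argmin_lin (gradf y) \<Psi> \<noteq> {}"
    and c: "0 < c" "c < 1" and rho: "0 < \<rho>" "\<rho> < 1" and c_rho: "c + \<rho> > 1"
    and x0: "x 0 \<in> edom \<Psi>"
    and s_def: "\<forall>k. s k \<in> argmin_lin (gradf (x k)) \<Psi>"
    and x_step: "\<forall>k. x (Suc k) = (1 - \<theta> k) *\<^sub>R x k + \<theta> k *\<^sub>R s k"
    and theta01: "\<forall>k. \<theta> k \<in> {0..1}"
    and theta_hat_def: "\<forall>k. \<theta>h k = (GREATEST t. t \<in> {0..1} \<and>
          (1 - t) * dgap f \<Psi> (x k) (gradf (x k)) + Dcal f gradf \<Psi> (x k) (s k) t
            \<le> (1 - c * t) * dgap f \<Psi> (x k) (gradf (x k)))"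
    and theta_bounds: "\<forall>k. \<rho> * \<theta>h k \<le> \<theta> k \<and> \<theta> k \<le> \<theta>h k"
    and G_def: "\<forall>k. G k = Min ((\<lambda>i. dgap f \<Psi> (x k) (gradf (x i))) ` {..k})"
    and q: "q > 1" and r: "0 \<le> r" "r \<le> 1"
    and grow: "growth f gradf \<Psi> q r M"
  shows "(\<forall>k. G (Suc k) \<le> G k * (1 - (c + \<rho> - 1) *
              min 1 ((q * (1 - c) / M * pw (G k) (1 - r)) powr (1 / (q - 1)))))
       \<and> (r = 1 \<longrightarrow> (\<forall>k. G k \<le> G 0 * (1 - (c + \<rho> - 1) *
              min 1 ((q * (1 - c) / M) powr (1 / (q - 1)))) ^ k))
       \<and> (r < 1 \<longrightarrow>
            (\<exists>k. G k powr (1 - r) \<le> M / (q * (1 - c))) \<and>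
            (\<forall>k0. G k0 powr (1 - r) \<le> M / (q * (1 - c)) \<and>
                  (\<forall>j<k0. \<not> (G j powr (1 - r) \<le> M / (q * (1 - c)))) \<longrightarrow>
               (\<forall>k\<le>k0. G k \<le> G 0 * (1 - (c + \<rho> - 1)) ^ k) \<and>
               (\<forall>k\<ge>k0. G k \<le> (G k0 powr ((r - 1) / (q - 1))
                    + (1 - r) * (c + \<rho> - 1) / (q - 1) * (q * (1 - c) / M) powr (1 / (q - 1))
                      * real (k - k0)) powr ((q - 1) / (r - 1)))))"
proof -
  have xdom: "x k \<in> edom \<Psi>" for k
  proof (induction k)
    case 0 show ?case by (rule x0)
  next
    case (Suc k)
    show ?case unfolding x_step[rule_format]
      using cpc_conv'(1)[OF Psi_cpc Suc argmin_dom[OF Psi_cpc s_def[rule_format, of k]]] theta01 by auto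
  qed
  have sdom: "s k \<in> edom \<Psi>" for k by (rule argmin_dom[OF Psi_cpc s_def[rule_format, of k]])
  have domf: "y \<in> edom f" if "y \<in> edom \<Psi>" for y using A1 that interior_subset by blast
  have der: "((\<lambda>z. real_of_ereal (f z)) has_derivative (\<lambda>h. inner (gradf y) h)) (at y)"
    if "y \<in> edom \<Psi>" for y using A1 that by blast
  define F where "F k = real_of_ereal (f (x k)) + real_of_ereal (\<Psi> (x k))" for k
  define a where "a i = inner (gradf (x i)) (x i) - real_of_ereal (f (x i))
                   - inner (gradf (x i)) (s i) - real_of_ereal (\<Psi> (s i))" for i
  have dg: "dgap f \<Psi> (x k) (gradf (x i)) = F k + a i" for k i
  proof -
    have fcg: "fconj f (gradf (x i)) = ereal (inner (gradf (x i)) (x i) - real_of_ereal (f (x i)))"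
      by (rule fconj_grad[OF f_cpc domf[OF xdom] der[OF xdom]])
    have fcP: "fconj \<Psi> (- gradf (x i)) = ereal (- inner (gradf (x i)) (s i) - real_of_ereal (\<Psi> (s i)))"
      by (rule fconj_argmin[OF Psi_cpc s_def[rule_format]])
    obtain rf where rf: "f (x k) = ereal rf" using cpc_fin[OF f_cpc domf[OF xdom[of k]]] by blast
    obtain rP where rP: "\<Psi> (x k) = ereal rP" using cpc_fin[OF Psi_cpc xdom[of k]] by blast
    have "f (x k) + \<Psi> (x k) + fconj f (gradf (x i)) + fconj \<Psi> (- gradf (x i))
       = ereal (rf + rP + (inner (gradf (x i)) (x i) - real_of_ereal (f (x i)))
           + (- inner (gradf (x i)) (s i) - real_of_ereal (\<Psi> (s i))))"
      unfolding rf rP fcg fcP by simp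
    then show ?thesis unfolding dgap_def F_def a_def rf rP by simp
  qed
  have gnn: "0 \<le> F k + a i" for k i
  proof -
    have "real_of_ereal (f (x i)) + inner (gradf (x i)) (x k - x i) \<le> real_of_ereal (f (x k))"
      by (rule grad_ineq[OF f_cpc domf[OF xdom] domf[OF xdom] der[OF xdom]])
    moreover have "inner (gradf (x i)) (s i) + real_of_ereal (\<Psi> (s i))
        \<le> inner (gradf (x i)) (x k) + real_of_ereal (\<Psi> (x k))"
      by (rule argmin_ineq[OF Psi_cpc s_def[rule_format] xdom])
    ultimately show ?thesis unfolding F_def a_def by (simp add: inner_diff_right)
  qed
  have Gmin: "G k = Min ((\<lambda>i. F k + a i) ` {..k})" for k using G_def dg by simp
  have Gin: "\<exists>j\<le>k. G k = F k + a j" for k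
  proof -
    have "Min ((\<lambda>i. F k + a i) ` {..k}) \<in> (\<lambda>i. F k + a i) ` {..k}" by (rule Min_in) auto
    then obtain j where "j \<in> {..k}" "Min ((\<lambda>i. F k + a i) ` {..k}) = F k + a j" by blast
    then show ?thesis unfolding Gmin by auto
  qed
  have Gle: "j \<le> k \<Longrightarrow> G k \<le> F k + a j" for j k unfolding Gmin by (intro Min_le) auto
  have Gnn: "\<forall>k. 0 \<le> G k" using Gin gnn by metis
  define b where "b = c + \<rho> - 1"
  define C where "C = q * (1 - c) / M"
  define mm where "mm g = min 1 ((C * pw g (1 - r)) powr (1 / (q - 1)))" for g
  have mm0: "0 \<le> mm g" for g unfolding mm_def by auto
  have Mpos: "M > 0" using grow unfolding growth_def by simp
  have Cpos: "C > 0" unfolding C_def using q c Mpos by simp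
  have mmono: "mm g \<le> mm g'" if "0 \<le> g" "g \<le> g'" for g g'
  proof -
    have "pw g (1 - r) \<le> pw g' (1 - r)" unfolding pw_def using that r by (auto intro: powr_mono2)
    then have "C * pw g (1 - r) \<le> C * pw g' (1 - r)" using Cpos by simp
    then have "(C * pw g (1 - r)) powr (1 / (q - 1)) \<le> (C * pw g' (1 - r)) powr (1 / (q - 1))"
      using q Cpos by (intro powr_mono2) (auto simp: pw_def)
    then show ?thesis unfolding mm_def by (rule min.mono[OF order_refl])
  qed
  have bcr: "b \<le> c * \<rho>" unfolding b_def
  proof -
    have "0 \<le> (1 - c) * (1 - \<rho>)" using c rho by simp
    then show "c + \<rho> - 1 \<le> c * \<rho>" by (simp add: algebra_simps)
  qed
  have step1: "G (Suc k) \<le> G k * (1 - b * mm (G k))" for k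
  proof -
    obtain j where j: "j \<le> k" "G k = F k + a j" using Gin by blast
    have "G (Suc k) \<le> F (Suc k) + a j" using j by (intro Gle) simp
    define gp where "gp = dgap f \<Psi> (x k) (gradf (x k))"
    have th: "\<theta> k \<in> {0..1}" using theta01 by simp
    have tb: "\<rho> * \<theta>h k \<le> \<theta> k" "\<theta> k \<le> \<theta>h k" using theta_bounds by auto
    note SL = step_lemma[OF f_cpc Psi_cpc A1 xdom[of k] s_def[rule_format, of k] c rho(1) th
                 theta_hat_def[rule_format, of k] tb q r grow]
    have "F (Suc k) - F k \<le> - (c * \<rho>) * mm gp * gp"
      using SL(2) unfolding F_def x_step[rule_format] mm_def C_def gp_def .
    moreover have gpG: "G k \<le> gp" unfolding gp_def dg using Gle by simp
    moreover have "mm (G k) * G k \<le> mm gp * gp"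
      using gpG Gnn mm0 mmono by (intro mult_mono) auto
    moreover have "b * (mm (G k) * G k) \<le> c * \<rho> * (mm (G k) * G k)"
      using bcr Gnn mm0 by (intro mult_right_mono) auto
    moreover have "c * \<rho> * (mm (G k) * G k) \<le> c * \<rho> * (mm gp * gp)"
      using c rho \<open>mm (G k) * G k \<le> mm gp * gp\<close> by (intro mult_left_mono) auto
    ultimately show ?thesis using \<open>G (Suc k) \<le> F (Suc k) + a j\<close> j(2)
      by (simp add: algebra_simps)
  qed
  have st: "\<forall>k. G (Suc k) \<le> G k * (1 - b * min 1 ((C * pw (G k) (1 - r)) powr (1 / (q - 1))))"
    using step1 unfolding mm_def by simp
  have b01: "0 < b" "b < 1" unfolding b_def using c rho c_rho by auto
  have T: "M / (q * (1 - c)) = 1 / C" unfolding C_def by simp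
  show ?thesis using rates[OF Gnn st b01 Cpos T q r] st unfolding b_def C_def by simp
qed

end
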